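(* The At-least-1 objective is strategyproof against a manipulator $m^+$ (one who can only add edges) over directed networks. That is, for every $k$, every directed social network $G$, every agent $m$ and every manipulation in which $m$ adds outgoing edges $(m,a)\notin E$ (yielding $G^m$), we have \[\min_{P\in O(G^m)} u(m,P)\le\min_{P\in O(G)} u(m,P)\quad\text{and}\quad \max_{P\in O(G^m)} u(m,P)\le\max_{P\in O(G)} u(m,P),\] where $O(\cdot)$ is the set of At-least-1 solutions, $u(m,P)$ is computed in the true network $G$, and both the minimum and maximum over an empty solution set are taken to be $0$.
   Context: Let $A=\{a_1,\dots,a_n\}$ be a finite nonempty set of agents and $G=\langle A,E\rangle$ a directed graph without self-loops (the social network); $N(a)=\{b:(a,b)\in E\}$. For a coalition $C\subseteq A$ with $a\in C$, $u(a,C)=|C\cap N(a)|$. For $0<k\le n$, $\Pi_k$ is the set of partitions of $A$ into exactly $k$ nonempty coalitions; for $P\in\Pi_k$, $u(a,P)=u(a,C)$ where $C\in P$ contains $a$. The At-least-1 objective: $O(G)$ is the set of all $P\in\Pi_k$ such that every agent has utility at least $1$ (utilities computed in the network in question); if no such $P$ exists the instance is infeasible, $O(G)=\emptyset$, and all agents are considered to have utility $0$. A manipulator $m$ of type $m^+$ in a directed network may add only outgoing edges $(m,a)\notin E$, so $N^m(a)=N(a)$ for all $a\ne m$ in the reported network $G^m$. The utility $u(m,P)$ of the manipulator is always computed with respect to his true neighbours in the original $G$. *)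

theory Defs
  imports Main "HOL-Library.Disjoint_Sets"
begin

definition social_network :: "'a set \<Rightarrow> ('a \<times> 'a) set \<Rightarrow> bool" where
  "social_network A E \<longleftrightarrow> finite A \<and> A \<noteq> {} \<and> E \<subseteq> A \<times> A \<and> (\<forall>a. (a, a) \<notin> E)"

definition nbrs :: "('a \<times> 'a) set \<Rightarrow> 'a \<Rightarrow> 'a set" where
  "nbrs E a = {b. (a, b) \<in> E}"

definition util :: "('a \<times> 'a) set \<Rightarrow> 'a \<Rightarrow> 'a set \<Rightarrow> nat" where
  "util E a C = card (C \<inter> nbrs E a)"

definition Pi_k :: "'a set \<Rightarrow> nat \<Rightarrow> 'a set set set" where
  "Pi_k A k = {P. partition_on A P \<and> card P = k}"

definition coalition_of :: "'a set set \<Rightarrow> 'a \<Rightarrow> 'a set" where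
  "coalition_of P a = (THE C. C \<in> P \<and> a \<in> C)"

definition utilP :: "('a \<times> 'a) set \<Rightarrow> 'a \<Rightarrow> 'a set set \<Rightarrow> nat" where
  "utilP E a P = util E a (coalition_of P a)"

definition atleast1 :: "'a set \<Rightarrow> ('a \<times> 'a) set \<Rightarrow> nat \<Rightarrow> 'a set set set" where
  "atleast1 A E k = {P \<in> Pi_k A k. \<forall>a\<in>A. utilP E a P \<ge> 1}"

definition min0 :: "('b \<Rightarrow> nat) \<Rightarrow> 'b set \<Rightarrow> nat" where
  "min0 f S = (if S = {} then 0 else Min (f ` S))"

definition max0 :: "('b \<Rightarrow> nat) \<Rightarrow> 'b set \<Rightarrow> nat" where
  "max0 f S = (if S = {} then 0 else Max (f ` S))"

end

theory Submission
  imports Defs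
begin

lemma fin_al1: "finite A \<Longrightarrow> finite (atleast1 A X k)"
proof -
  assume "finite A"
  have "atleast1 A X k \<subseteq> Pow (Pow A)"
    unfolding atleast1_def Pi_k_def partition_on_def by auto
  thus ?thesis using \<open>finite A\<close> by (meson finite_Pow_iff finite_subset)
qed

theorem theorem3:
  fixes A :: "'a set" and E Em :: "('a \<times> 'a) set" and m :: 'a and k :: nat
  assumes "social_network A E"
    and "m \<in> A"
    and "0 < k" and "k \<le> card A"
    and "E \<subseteq> Em"
    and "\<forall>(x, y) \<in> Em - E. x = m \<and> y \<in> A \<and> y \<noteq> m"
  shows "min0 (utilP E m) (atleast1 A Em k) \<le> min0 (utilP E m) (atleast1 A E k)
       \<and> max0 (utilP E m) (atleast1 A Em k) \<le> max0 (utilP E m) (atleast1 A E k)"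
proof -
  have finA: "finite A" and EA: "E \<subseteq> A \<times> A" using assms(1) unfolding social_network_def by auto
  have nb_eq: "nbrs Em a = nbrs E a" if "a \<noteq> m" for a
    using assms(5,6) that unfolding nbrs_def by auto
  have nb_sub: "nbrs E m \<subseteq> nbrs Em m" using assms(5) unfolding nbrs_def by auto
  have nb_fin: "finite (nbrs Em m)"
  proof -
    have "nbrs Em m \<subseteq> A" using assms(6) EA unfolding nbrs_def by auto
    thus ?thesis using finA finite_subset by blast
  qed
  have ueq: "utilP Em a P = utilP E a P" if "a \<noteq> m" for a P
    unfolding utilP_def util_def using nb_eq[OF that] by simp
  have ule: "utilP E m P \<le> utilP Em m P" for P
    unfolding utilP_def util_def
    by (rule card_mono) (use nb_fin nb_sub in auto)
  let ?O = "atleast1 A E k" and ?Om = "atleast1 A Em k" and ?f = "utilP E m"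
  have L1: "?O \<subseteq> ?Om"
  proof
    fix P assume "P \<in> ?O"
    hence Pk: "P \<in> Pi_k A k" and H: "\<forall>a\<in>A. 1 \<le> utilP E a P"
      unfolding atleast1_def by auto
    have "1 \<le> utilP Em a P" if a: "a \<in> A" for a
    proof (cases "a = m")
      case True thus ?thesis using H a ule[of P] by fastforce
    next
      case False thus ?thesis using H a ueq[OF False, of P] by simp
    qed
    thus "P \<in> ?Om" using Pk unfolding atleast1_def by auto
  qed
  have L2: "P \<in> ?O" if "P \<in> ?Om" "?f P \<ge> 1" for P
    using that ueq unfolding atleast1_def by (auto, metis)
  have fO: "finite ?O" and fOm: "finite ?Om" using fin_al1 finA by auto
  have part1: "min0 ?f ?Om \<le> min0 ?f ?O"
  proof (cases "?O = {}")
    case True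
    show ?thesis
    proof (cases "?Om = {}")
      case True then show ?thesis unfolding min0_def by simp
    next
      case False
      then obtain P where P: "P \<in> ?Om" by blast
      have "?f P = 0" using L2[OF P] True by fastforce
      hence "Min (?f ` ?Om) \<le> 0" using P fOm by (metis Min_le finite_imageI image_eqI)
      thus ?thesis unfolding min0_def by simp
    qed
  next
    case False
    hence "?Om \<noteq> {}" using L1 by blast
    moreover have "Min (?f ` ?Om) \<le> Min (?f ` ?O)"
      by (rule Min_antimono) (use L1 False fOm in auto)
    ultimately show ?thesis using False unfolding min0_def by simp
  qed
  have part2: "max0 ?f ?Om \<le> max0 ?f ?O"
  proof (cases "?Om = {}")
    case True then show ?thesis unfolding max0_def by simp
  next
    case False
    have "Max (?f ` ?Om) \<in> ?f ` ?Om" using False fOm by (intro Max_in) auto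
    then obtain P where P: "P \<in> ?Om" and PM: "Max (?f ` ?Om) = ?f P" by auto
    show ?thesis
    proof (cases "?f P = 0")
      case True then show ?thesis using False PM unfolding max0_def by simp
    next
      case nz: False
      hence PO: "P \<in> ?O" using L2[OF P] by simp
      hence "?f P \<le> Max (?f ` ?O)" using fO by (intro Max_ge) auto
      thus ?thesis using False PM PO unfolding max0_def by auto
    qed
  qed
  show ?thesis using part1 part2 by simp
qed

end
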